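(* Assume that $K$ is w-simple, that $\langle S|$ and the inhomogeneities are such that the covectors $\langle h_1,\dots,h_N|$, $(h_1,\dots,h_N)\in\{0,\dots,n-1\}^N$, form a basis of the dual of $\mathcal H$, and let $\mathbb B^{(K)}(\lambda)$ be the operator, diagonal in this basis, defined by $\langle h_1,\dots,h_N|\mathbb B^{(K)}(\lambda)=b_{h_1,\dots,h_N}(\lambda)\langle h_1,\dots,h_N|$ with $b_{h_1,\dots,h_N}(\lambda)=\prod_{a=1}^N(\lambda-\xi_a)^{n-1-h_a}(\lambda-\xi_a+\eta)^{h_a}$. Let $t_1(\lambda)$ be any eigenvalue of $T^{(K)}_1(\lambda)$ and let $\varphi_t(\lambda)=\prod_{a=1}^{\mathsf M}(\lambda-\lambda_a)$, with $\mathsf M\le N$ and $\lambda_a\ne\xi_b$ for all $a,b$, be the polynomial satisfying with $t_0\equiv 1,t_1,\dots,t_n$ the quantum spectral curve equation $\sum_{b=0}^n\alpha_b(\lambda)\varphi_t(\lambda-b\eta)t_{n-b}(\lambda-b\eta)=0$ with $\bar\alpha=\mathsf k_1$. Then the eigenvector of $T^{(K)}_1(\lambda)$ associated with $t_1(\lambda)$ is (up to normalization) $$|t\rangle=\prod_{a=1}^{\mathsf M}\mathbb B^{(K)}(\lambda_a)\,|t_0\rangle .$$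
   Context: Fix integers $n\ge 2$, $N\ge1$, $\eta\in\mathbb C$ and generic inhomogeneities $\xi_1,\dots,\xi_N$. Let $\mathcal H=\bigotimes_{l=1}^N\mathbb C^n$, $R_{a,b}(\lambda)=\lambda I+\eta\,\mathbb P_{a,b}$ ($\mathbb P$ the permutation), $M^{(K)}_a(\lambda)=K_aR_{a,N}(\lambda-\xi_N)\cdots R_{a,1}(\lambda-\xi_1)$, and fused transfer matrices $T^{(K)}_m(\lambda)=\mathrm{tr}_{1,\dots,m}[P^-_{1,\dots,m}M_1^{(K)}(\lambda)\cdots M_m^{(K)}(\lambda-(m-1)\eta)]$ with $P^-_{1,\dots,m}=\frac1{m!}\sum_{\pi\in S_m}\mathrm{sgn}(\pi)P_\pi$. Set $T_m^{(K,\infty)}=\mathrm{tr}_{1,\dots,m}[P^-_{1,\dots,m}K_1\cdots K_m]$, $g_a^{(m)}(\lambda)=\prod_{b\ne a}\frac{\lambda-\xi_b}{\xi_a-\xi_b}\prod_{b=1}^N\prod_{r=1}^{m-1}\frac1{\xi_a-\xi_b-r\eta}$. Given an eigenvalue $t_1$ of $T_1^{(K)}$ (a function with $T_1^{(K)}(\lambda)v=t_1(\lambda)v$ for all $\lambda$, $v\neq0$), set $t_0\equiv1$, $t_n(\lambda)=\mathrm{q\text{-}det}\,M^{(K)}(\lambda)=\det K\prod_{b=1}^N[(\lambda-\xi_b+\eta)\prod_{m=1}^{n-1}(\lambda-\xi_b-m\eta)]$ and, for $m\in\{1,\dots,n-2\}$, $t_{m+1}(\lambda)=\prod_{b=1}^N\prod_{r=1}^m(\lambda-\xi_b-r\eta)[T^{(K,\infty)}_{m+1}\prod_b(\lambda-\xi_b)+\sum_ag_a^{(m+1)}(\lambda)t_1(\xi_a)t_m(\xi_a-\eta)]$.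 Coefficients: $\alpha_0=-1$, $\alpha_1(\lambda)=\bar\alpha\prod_{a=1}^N(\lambda+\eta-\xi_a)$, $\alpha_{1+j}(\lambda)=(-1)^j\prod_{h=0}^j\alpha_1(\lambda-h\eta)$. A matrix is w-simple if each eigenvalue has a one-dimensional eigenspace. Write $K=W_KK_JW_K^{-1}$ with $K_J$ an upper-triangular Jordan form such that $K_Je_1=\mathsf k_1e_1$, $\mathsf k_1\ne0$, $e_1=(1,0,\dots,0)^T$; $|t_0\rangle=(\bigotimes_{a=1}^NW_{K,a})\,e_1^{\otimes N}$. Given a covector $\langle S|$, $\langle h_1,\dots,h_N|=\langle S|\prod_{l=1}^N(T_1^{(K)}(\xi_l))^{h_l}$. *)

theory Defs
  imports "Jordan_Normal_Form.Jordan_Normal_Form_Uniqueness" "HOL-Combinatorics.Permutations"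
begin

text \<open>Quantum space H = (C^n)^{\<otimes> N}. Basis vectors are indexed by configurations
  x : {1..N} \<rightarrow> {0..n-1} (extensional functions). Vectors and covectors are functions
  configuration \<Rightarrow> complex (only values on configurations matter); operators on H are
  given by their matrix entries A x y; operators on C^n \<otimes> H (auxiliary space a, i.e.
  index (a,x) with a < n) by entries A (a,x) (b,y).\<close>

type_synonym config = "nat \<Rightarrow> nat"
type_synonym hvec = "config \<Rightarrow> complex"
type_synonym hop = "config \<Rightarrow> config \<Rightarrow> complex"
type_synonym aop = "nat \<times> config \<Rightarrow> nat \<times> config \<Rightarrow> complex"

definition configs :: "nat \<Rightarrow> nat \<Rightarrow> config set" where
  "configs n N = PiE {1..N} (\<lambda>_. {..<n})"

definition op_app :: "nat \<Rightarrow> nat \<Rightarrow> hop \<Rightarrow> hvec \<Rightarrow> hvec" where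
  "op_app n N A v = (\<lambda>x. \<Sum>y\<in>configs n N. A x y * v y)"

definition covec_app :: "nat \<Rightarrow> nat \<Rightarrow> hvec \<Rightarrow> hop \<Rightarrow> hvec" where
  "covec_app n N phi A = (\<lambda>y. \<Sum>x\<in>configs n N. phi x * A x y)"

definition aop_mult :: "nat \<Rightarrow> nat \<Rightarrow> aop \<Rightarrow> aop \<Rightarrow> aop" where
  "aop_mult n N A B = (\<lambda>(a,x) (c,z). \<Sum>b<n. \<Sum>y\<in>configs n N. A (a,x) (b,y) * B (b,y) (c,z))"

definition aop_id :: aop where
  "aop_id = (\<lambda>(a,x) (b,y). if a = b \<and> x = y then 1 else 0)"

definition K_aux :: "complex mat \<Rightarrow> aop" where
  "K_aux K = (\<lambda>(a,x) (b,y). if x = y then K $$ (a,b) else 0)"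

text \<open>R_{a,l}(mu) = mu I + eta P_{a,l}; P_{a,l}(e_b \<otimes> e_y) = e_{y l} \<otimes> e_{y(l:=b)}.\<close>
definition R_aux :: "complex \<Rightarrow> nat \<Rightarrow> complex \<Rightarrow> aop" where
  "R_aux eta l mu = (\<lambda>(a,x) (b,y).
     (if a = b \<and> x = y then mu else 0) + (if a = y l \<and> x = y(l := b) then eta else 0))"

fun R_prod :: "nat \<Rightarrow> nat \<Rightarrow> complex \<Rightarrow> (nat \<Rightarrow> complex) \<Rightarrow> complex \<Rightarrow> nat \<Rightarrow> aop" where
  "R_prod n N eta xi lam 0 = aop_id"
| "R_prod n N eta xi lam (Suc l) =
     aop_mult n N (R_aux eta (Suc l) (lam - xi (Suc l))) (R_prod n N eta xi lam l)"

definition monodromy :: "nat \<Rightarrow> nat \<Rightarrow> complex \<Rightarrow> (nat \<Rightarrow> complex) \<Rightarrow> complex mat \<Rightarrow> complex \<Rightarrow> aop" where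
  "monodromy n N eta xi K lam = aop_mult n N (K_aux K) (R_prod n N eta xi lam N)"

definition transfer1 :: "nat \<Rightarrow> nat \<Rightarrow> complex \<Rightarrow> (nat \<Rightarrow> complex) \<Rightarrow> complex mat \<Rightarrow> complex \<Rightarrow> hop" where
  "transfer1 n N eta xi K lam = (\<lambda>x y. \<Sum>a<n. monodromy n N eta xi K lam (a,x) (a,y))"

text \<open>T^{(K,\<infinity>)}_m = tr_{1..m}[P^-_{1..m} K_1 \<cdots> K_m], written out in components:
  tr[P_pi K^{\<otimes> m}] = sum over i : {0..m-1} \<rightarrow> {0..n-1} of prod_j K_{i(pi j), i j}.\<close>
definition Tinf :: "nat \<Rightarrow> complex mat \<Rightarrow> nat \<Rightarrow> complex" where
  "Tinf n K m = (1 / of_nat (fact m)) *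
     (\<Sum>p\<in>{p. p permutes {..<m}}. of_int (sign p) *
        (\<Sum>i\<in>PiE {..<m} (\<lambda>_. {..<n}). \<Prod>j<m. K $$ (i (p j), i j)))"

definition g_coef :: "nat \<Rightarrow> complex \<Rightarrow> (nat \<Rightarrow> complex) \<Rightarrow> nat \<Rightarrow> nat \<Rightarrow> complex \<Rightarrow> complex" where
  "g_coef N eta xi m a lam =
     (\<Prod>b\<in>{1..N}-{a}. (lam - xi b) / (xi a - xi b)) *
     (\<Prod>b\<in>{1..N}. \<Prod>r\<in>{1..<m}. 1 / (xi a - xi b - of_nat r * eta))"

definition qdet :: "nat \<Rightarrow> nat \<Rightarrow> complex \<Rightarrow> (nat \<Rightarrow> complex) \<Rightarrow> complex mat \<Rightarrow> complex \<Rightarrow> complex" where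
  "qdet n N eta xi K lam = det K *
     (\<Prod>b\<in>{1..N}. (lam - xi b + eta) * (\<Prod>m\<in>{1..n-1}. lam - xi b - of_nat m * eta))"

text \<open>The functions t_0 = 1, t_1, ..., t_n (only indices 0..n are meaningful).\<close>
fun tseq :: "nat \<Rightarrow> nat \<Rightarrow> complex \<Rightarrow> (nat \<Rightarrow> complex) \<Rightarrow> complex mat \<Rightarrow> (complex \<Rightarrow> complex)
    \<Rightarrow> nat \<Rightarrow> complex \<Rightarrow> complex" where
  "tseq n N eta xi K t1 0 lam = 1"
| "tseq n N eta xi K t1 (Suc 0) lam = t1 lam"
| "tseq n N eta xi K t1 (Suc (Suc m)) lam =
     (if Suc (Suc m) = n then qdet n N eta xi K lam
      else (\<Prod>b\<in>{1..N}. \<Prod>r\<in>{1..Suc m}. lam - xi b - of_nat r * eta) *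
        (Tinf n K (Suc (Suc m)) * (\<Prod>b\<in>{1..N}. lam - xi b)
         + (\<Sum>a\<in>{1..N}. g_coef N eta xi (Suc (Suc m)) a lam * t1 (xi a)
              * tseq n N eta xi K t1 (Suc m) (xi a - eta))))"

definition alpha1 :: "nat \<Rightarrow> complex \<Rightarrow> (nat \<Rightarrow> complex) \<Rightarrow> complex \<Rightarrow> complex \<Rightarrow> complex" where
  "alpha1 N eta xi abar lam = abar * (\<Prod>a\<in>{1..N}. lam + eta - xi a)"

definition alpha :: "nat \<Rightarrow> complex \<Rightarrow> (nat \<Rightarrow> complex) \<Rightarrow> complex \<Rightarrow> nat \<Rightarrow> complex \<Rightarrow> complex" where
  "alpha N eta xi abar j lam =
     (if j = 0 then -1
      else (-1) ^ (j - 1) * (\<Prod>h\<in>{0..j-1}. alpha1 N eta xi abar (lam - of_nat h * eta)))"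

definition w_simple :: "complex mat \<Rightarrow> bool" where
  "w_simple K = (\<forall>e. eigenvalue K e \<longrightarrow> kernel_dim (char_matrix K e) = 1)"

text \<open>|t_0> = (\<otimes>_a W_{K,a}) e_1^{\<otimes> N}.\<close>
definition t0_vec :: "nat \<Rightarrow> complex mat \<Rightarrow> hvec" where
  "t0_vec N W = (\<lambda>x. \<Prod>l\<in>{1..N}. W $$ (x l, 0))"

fun hcov_aux :: "nat \<Rightarrow> nat \<Rightarrow> complex \<Rightarrow> (nat \<Rightarrow> complex) \<Rightarrow> complex mat \<Rightarrow> hvec
    \<Rightarrow> config \<Rightarrow> nat \<Rightarrow> hvec" where
  "hcov_aux n N eta xi K S h 0 = S"
| "hcov_aux n N eta xi K S h (Suc l) =
     ((\<lambda>phi. covec_app n N phi (transfer1 n N eta xi K (xi (Suc l)))) ^^ h (Suc l))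
       (hcov_aux n N eta xi K S h l)"

definition hcov :: "nat \<Rightarrow> nat \<Rightarrow> complex \<Rightarrow> (nat \<Rightarrow> complex) \<Rightarrow> complex mat \<Rightarrow> hvec
    \<Rightarrow> config \<Rightarrow> hvec" where
  "hcov n N eta xi K S h = hcov_aux n N eta xi K S h N"

definition is_dual_basis :: "nat \<Rightarrow> nat \<Rightarrow> (config \<Rightarrow> hvec) \<Rightarrow> bool" where
  "is_dual_basis n N cv = (\<forall>phi. \<exists>!c. c \<in> extensional (configs n N) \<and>
      (\<forall>y\<in>configs n N. phi y = (\<Sum>h\<in>configs n N. c h * cv h y)))"

definition b_eig :: "nat \<Rightarrow> nat \<Rightarrow> complex \<Rightarrow> (nat \<Rightarrow> complex) \<Rightarrow> config \<Rightarrow> complex \<Rightarrow> complex" where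
  "b_eig n N eta xi h lam = (\<Prod>a\<in>{1..N}. (lam - xi a) ^ (n - 1 - h a) * (lam - xi a + eta) ^ h a)"

fun B_prod :: "nat \<Rightarrow> nat \<Rightarrow> (complex \<Rightarrow> hop) \<Rightarrow> (nat \<Rightarrow> complex) \<Rightarrow> nat \<Rightarrow> hvec \<Rightarrow> hvec" where
  "B_prod n N B lams 0 v = v"
| "B_prod n N B lams (Suc M) v = B_prod n N B lams M (op_app n N (B (lams (Suc M))) v)"

end

theory Submission imports Defs begin

lemma cfg_upd: "x \<in> configs n N \<Longrightarrow> l \<in> {1..N} \<Longrightarrow> a < n \<Longrightarrow> x(l := a) \<in> configs n N"
  by (auto simp: configs_def PiE_iff extensional_def)

lemma cfg_lt: "x \<in> configs n N \<Longrightarrow> l \<in> {1..N} \<Longrightarrow> x l < n"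
  by (auto simp: configs_def PiE_iff)

lemma cfg_fin: "finite (configs n N)"
  by (simp add: configs_def finite_PiE)

definition act :: "nat \<Rightarrow> nat \<Rightarrow> aop \<Rightarrow> (nat \<times> config \<Rightarrow> complex) \<Rightarrow> (nat \<times> config \<Rightarrow> complex)" where
  "act n N A F = (\<lambda>(a,x). \<Sum>b<n. \<Sum>y\<in>configs n N. A (a,x) (b,y) * F (b,y))"

lemma sumS: "(\<Sum>b<n. \<Sum>y\<in>configs n N. f (b,y)) = (\<Sum>p\<in>{..<n} \<times> configs n N. f p)"
  by (simp add: sum.cartesian_product)

lemma act_mult: "act n N (aop_mult n N A B) F = act n N A (act n N B F)"
proof (rule ext, clarify)
  fix a :: nat and x :: config
  let ?S = "{..<n} \<times> configs n N"
  have "act n N (aop_mult n N A B) F (a,x) =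
     (\<Sum>q\<in>?S. (\<Sum>p\<in>?S. A (a,x) p * B p q) * F q)"
  proof -
    have e1: "\<And>q. (\<Sum>ba<n. \<Sum>ya\<in>configs n N. A (a,x) (ba,ya) * B (ba,ya) q) = (\<Sum>p\<in>?S. A (a,x) p * B p q)"
      by (simp add: sum.cartesian_product split_def)
    show ?thesis unfolding act_def aop_mult_def by (simp add: e1 sum.cartesian_product split_def)
  qed
  also have "\<dots> = (\<Sum>q\<in>?S. \<Sum>p\<in>?S. A (a,x) p * B p q * F q)"
    by (simp add: sum_distrib_right)
  also have "\<dots> = (\<Sum>p\<in>?S. \<Sum>q\<in>?S. A (a,x) p * B p q * F q)"
    by (rule sum.swap)
  also have "\<dots> = (\<Sum>p\<in>?S. A (a,x) p * (\<Sum>q\<in>?S. B p q * F q))"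
    by (simp add: sum_distrib_left mult.assoc)
  also have "\<dots> = act n N A (act n N B F) (a,x)"
  proof -
    have e1: "\<And>p. (\<Sum>b<n. \<Sum>y\<in>configs n N. B p (b,y) * F (b,y)) = (\<Sum>q\<in>?S. B p q * F q)"
      by (simp add: sum.cartesian_product split_def)
    show ?thesis unfolding act_def by (simp add: e1 sum.cartesian_product split_def)
  qed
  finally show "act n N (aop_mult n N A B) F (a,x) = act n N A (act n N B F) (a,x)" .
qed


definition eqD :: "nat \<Rightarrow> nat \<Rightarrow> (nat \<times> config \<Rightarrow> complex) \<Rightarrow> (nat \<times> config \<Rightarrow> complex) \<Rightarrow> bool" where
  "eqD n N F G = (\<forall>a x. a < n \<longrightarrow> x \<in> configs n N \<longrightarrow> F (a,x) = G (a,x))"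

lemma eqD_refl: "eqD n N F F" by (simp add: eqD_def)
lemma eqD_trans: "eqD n N F G \<Longrightarrow> eqD n N G H \<Longrightarrow> eqD n N F H" by (simp add: eqD_def)
lemma eqD_sym: "eqD n N F G \<Longrightarrow> eqD n N G F" by (simp add: eqD_def)

lemma act_alt: "act n N A F (a,x) = (\<Sum>p\<in>{..<n}\<times>configs n N. A (a,x) p * F p)"
  by (simp add: act_def sum.cartesian_product split_def)

lemma act_cong: "eqD n N F G \<Longrightarrow> act n N A F = act n N A G"
  unfolding act_def eqD_def by (intro ext) (auto intro!: sum.cong)

definition Ract :: "complex \<Rightarrow> nat \<Rightarrow> complex \<Rightarrow> (nat \<times> config \<Rightarrow> complex) \<Rightarrow> (nat \<times> config \<Rightarrow> complex)" where
  "Ract eta l mu F = (\<lambda>(a,x). mu * F (a,x) + eta * F (x l, x(l := a)))"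

definition Kact :: "nat \<Rightarrow> complex mat \<Rightarrow> (nat \<times> config \<Rightarrow> complex) \<Rightarrow> (nat \<times> config \<Rightarrow> complex)" where
  "Kact n K F = (\<lambda>(a,x). \<Sum>b<n. K $$ (a,b) * F (b,x))"

lemma R_aux_alt: "R_aux eta l mu (a,x) p = (if p = (a,x) then mu else 0) + (if p = (x l, x(l:=a)) then eta else 0)"
proof (cases p)
  case (Pair b y)
  have "(a = y l \<and> x = y(l := b)) = (b = x l \<and> y = x(l := a))"
    by (auto simp: fun_eq_iff)
  then show ?thesis using Pair by (auto simp: R_aux_def)
qed

lemma act_R: assumes "l \<in> {1..N}" shows "eqD n N (act n N (R_aux eta l mu) F) (Ract eta l mu F)"
  unfolding eqD_def
proof (intro allI impI)
  fix a x assume a: "a < n" and x: "x \<in> configs n N"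
  let ?S = "{..<n}\<times>configs n N"
  have m1: "(a,x) \<in> ?S" using a x by simp
  have m2: "(x l, x(l:=a)) \<in> ?S" using a x assms cfg_upd cfg_lt by auto
  have "act n N (R_aux eta l mu) F (a,x) = (\<Sum>p\<in>?S. (if p = (a,x) then mu * F p else 0))
        + (\<Sum>p\<in>?S. (if p = (x l, x(l:=a)) then eta * F p else 0))"
    unfolding act_alt R_aux_alt distrib_right sum.distrib[symmetric] by (rule sum.cong) auto
  also have "\<dots> = Ract eta l mu F (a,x)"
    using m1 m2 by (simp add: Ract_def cfg_fin)
  finally show "act n N (R_aux eta l mu) F (a,x) = Ract eta l mu F (a,x)" .
qed

lemma act_K: "eqD n N (act n N (K_aux K) F) (Kact n K F)"
  unfolding eqD_def
proof (intro allI impI)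
  fix a x assume a: "a < n" and x: "x \<in> configs n N"
  have "act n N (K_aux K) F (a,x) = (\<Sum>b<n. \<Sum>y\<in>configs n N. if y = x then K $$ (a,b) * F (b,y) else 0)"
    by (auto simp: act_def K_aux_def intro!: sum.cong)
  also have "\<dots> = Kact n K F (a,x)" using x by (simp add: Kact_def cfg_fin)
  finally show "act n N (K_aux K) F (a,x) = Kact n K F (a,x)" .
qed

lemma Ract_cong: "l \<in> {1..N} \<Longrightarrow> eqD n N F G \<Longrightarrow> eqD n N (Ract eta l mu F) (Ract eta l mu G)"
  unfolding eqD_def Ract_def using cfg_upd cfg_lt by auto

lemma Kact_cong: "eqD n N F G \<Longrightarrow> eqD n N (Kact n K F) (Kact n K G)"
  unfolding eqD_def Kact_def by auto

definition rch :: "complex \<Rightarrow> (nat \<Rightarrow> complex) \<Rightarrow> complex \<Rightarrow> nat list \<Rightarrow> (nat \<times> config \<Rightarrow> complex) \<Rightarrow> (nat \<times> config \<Rightarrow> complex)" where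
  "rch eta xi lam js F = fold (\<lambda>j G. Ract eta j (lam - xi j) G) js F"

lemma rch_cong: "set js \<subseteq> {1..N} \<Longrightarrow> eqD n N F G \<Longrightarrow> eqD n N (rch eta xi lam js F) (rch eta xi lam js G)"
proof (induction js arbitrary: F G)
  case Nil then show ?case by (simp add: rch_def)
next
  case (Cons j js)
  have "eqD n N (Ract eta j (lam - xi j) F) (Ract eta j (lam - xi j) G)"
    using Cons.prems by (intro Ract_cong) auto
  then show ?case using Cons by (simp add: rch_def)
qed

lemma act_Rprod: "l \<le> N \<Longrightarrow> eqD n N (act n N (R_prod n N eta xi lam l) F) (rch eta xi lam [1..<Suc l] F)"
proof (induction l)
  case 0
  show ?case unfolding eqD_def
  proof (intro allI impI)
    fix a x assume "a < n" "x \<in> configs n N"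
    have "aop_id (a,x) p * F p = (if p = (a,x) then F (a,x) else 0)" for p
      by (cases p) (auto simp: aop_id_def)
    then show "act n N (R_prod n N eta xi lam 0) F (a, x) = rch eta xi lam [1..<Suc 0] F (a, x)"
      using \<open>a < n\<close> \<open>x \<in> configs n N\<close> by (simp add: act_alt rch_def cfg_fin)
  qed
next
  case (Suc l)
  have "act n N (R_prod n N eta xi lam (Suc l)) F =
        act n N (R_aux eta (Suc l) (lam - xi (Suc l))) (act n N (R_prod n N eta xi lam l) F)"
    by (simp add: act_mult)
  also have "\<dots> = act n N (R_aux eta (Suc l) (lam - xi (Suc l))) (rch eta xi lam [1..<Suc l] F)"
    using Suc by (intro act_cong) simp
  finally have e: "act n N (R_prod n N eta xi lam (Suc l)) F = act n N (R_aux eta (Suc l) (lam - xi (Suc l))) (rch eta xi lam [1..<Suc l] F)" .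
  have "rch eta xi lam [1..<Suc (Suc l)] F = Ract eta (Suc l) (lam - xi (Suc l)) (rch eta xi lam [1..<Suc l] F)"
    by (simp add: rch_def)
  then show ?case unfolding e using act_R[of "Suc l" N n eta] Suc.prems by simp
qed

definition dl :: "nat \<Rightarrow> hvec \<Rightarrow> (nat \<times> config \<Rightarrow> complex)" where
  "dl c w = (\<lambda>(b,y). if b = c then w y else 0)"

lemma transfer_act: assumes x: "x \<in> configs n N"
  shows "op_app n N (transfer1 n N eta xi K lam) w x = (\<Sum>c<n. Kact n K (rch eta xi lam [1..<Suc N] (dl c w)) (c,x))"
proof -
  let ?M = "monodromy n N eta xi K lam"
  have 1: "act n N ?M (dl c w) (c,x) = Kact n K (rch eta xi lam [1..<Suc N] (dl c w)) (c,x)" if c: "c < n" for c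
  proof -
    have "act n N ?M (dl c w) = act n N (K_aux K) (act n N (R_prod n N eta xi lam N) (dl c w))"
      by (simp add: monodromy_def act_mult)
    moreover have "eqD n N (act n N (K_aux K) (act n N (R_prod n N eta xi lam N) (dl c w)))
        (Kact n K (rch eta xi lam [1..<Suc N] (dl c w)))"
      by (rule eqD_trans[OF act_K Kact_cong[OF act_Rprod]]) simp
    ultimately show ?thesis using c x by (simp add: eqD_def)
  qed
  have 2: "act n N ?M (dl c w) (c,x) = (\<Sum>y\<in>configs n N. ?M (c,x) (c,y) * w y)" if c: "c < n" for c
  proof -
    have "act n N ?M (dl c w) (c,x) = (\<Sum>b<n. if b = c then (\<Sum>y\<in>configs n N. ?M (c,x) (c,y) * w y) else 0)"
      unfolding act_def dl_def by (simp only: case_prod_conv) (intro sum.cong, auto)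
    then show ?thesis using c by simp
  qed
  have "op_app n N (transfer1 n N eta xi K lam) w x = (\<Sum>y\<in>configs n N. \<Sum>c<n. ?M (c,x) (c,y) * w y)"
    by (simp add: op_app_def transfer1_def sum_distrib_right)
  also have "\<dots> = (\<Sum>c<n. \<Sum>y\<in>configs n N. ?M (c,x) (c,y) * w y)" by (rule sum.swap)
  also have "\<dots> = (\<Sum>c<n. Kact n K (rch eta xi lam [1..<Suc N] (dl c w)) (c,x))"
    using 1 2 by simp
  finally show ?thesis .
qed


definition sig :: "nat \<Rightarrow> (nat \<times> config \<Rightarrow> complex) \<Rightarrow> (nat \<times> config \<Rightarrow> complex)" where
  "sig s F = (\<lambda>(a,x). F (x s, x(s := a)))"
definition R2 :: "complex \<Rightarrow> nat \<Rightarrow> nat \<Rightarrow> complex \<Rightarrow> (nat \<times> config \<Rightarrow> complex) \<Rightarrow> (nat \<times> config \<Rightarrow> complex)" where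
  "R2 eta s j mu F = (\<lambda>(a,x). mu * F (a,x) + eta * F (a, x(s := x j, j := x s)))"
definition K2 :: "nat \<Rightarrow> complex mat \<Rightarrow> nat \<Rightarrow> (nat \<times> config \<Rightarrow> complex) \<Rightarrow> (nat \<times> config \<Rightarrow> complex)" where
  "K2 n K s F = (\<lambda>(a,x). \<Sum>b<n. K $$ (x s, b) * F (a, x(s := b)))"
definition rho :: "nat \<Rightarrow> nat \<Rightarrow> (nat \<times> config \<Rightarrow> complex) \<Rightarrow> (nat \<times> config \<Rightarrow> complex)" where
  "rho s c F = (\<lambda>(a,x). F (a, x(s := c)))"
definition sc :: "complex \<Rightarrow> (nat \<times> config \<Rightarrow> complex) \<Rightarrow> (nat \<times> config \<Rightarrow> complex)" where
  "sc e F = (\<lambda>p. e * F p)"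
definition p2 :: "complex \<Rightarrow> (nat \<Rightarrow> complex) \<Rightarrow> complex \<Rightarrow> nat \<Rightarrow> nat list \<Rightarrow> (nat \<times> config \<Rightarrow> complex) \<Rightarrow> (nat \<times> config \<Rightarrow> complex)" where
  "p2 eta xi lam s js F = fold (\<lambda>j G. R2 eta s j (lam - xi j) G) js F"

lemma L1: "j \<noteq> s \<Longrightarrow> Ract eta j mu (sig s F) = sig s (R2 eta s j mu F)"
proof (rule ext, clarify)
  fix a :: nat and x :: config assume "j \<noteq> s"
  then have "x(j := a, s := x j) = (x(s := a))(s := (x(s := a)) j, j := (x(s := a)) s)"
    by (auto simp: fun_eq_iff)
  then show "Ract eta j mu (sig s F) (a,x) = sig s (R2 eta s j mu F) (a,x)"
    using \<open>j \<noteq> s\<close> by (simp add: Ract_def sig_def R2_def)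
qed

lemma L1c: "\<forall>j\<in>set js. j \<noteq> s \<Longrightarrow> rch eta xi lam js (sig s F) = sig s (p2 eta xi lam s js F)"
  by (induction js arbitrary: F) (auto simp: rch_def p2_def L1)

lemma L2: "Kact n K (sig s F) = sig s (K2 n K s F)"
  by (rule ext, clarify) (simp add: Kact_def sig_def K2_def)

lemma L3: "Ract eta j mu (sc e F) = sc e (Ract eta j mu F)"
  by (rule ext, clarify) (simp add: Ract_def sc_def algebra_simps)

lemma L3c: "rch eta xi lam js (sc e F) = sc e (rch eta xi lam js F)"
  by (induction js arbitrary: F) (auto simp: rch_def L3)

lemma L3K: "Kact n K (sc e F) = sc e (Kact n K F)"
  by (rule ext, clarify) (simp add: Kact_def sc_def sum_distrib_left algebra_simps)

lemma L4: assumes "j \<noteq> s" "j \<noteq> j'" "s \<noteq> j'"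
  shows "R2 eta s j' mu (Ract eta j mu' F) = Ract eta j mu' (R2 eta s j' mu F)"
proof (rule ext, clarify)
  fix a :: nat and x :: config
  have e1: "(x(s := x j', j' := x s)) j = x j" using assms by simp
  have e2: "x(s := x j', j' := x s, j := a) = x(j := a, s := (x(j := a)) j', j' := (x(j := a)) s)"
    using assms by (auto simp: fun_eq_iff)
  show "R2 eta s j' mu (Ract eta j mu' F) (a,x) = Ract eta j mu' (R2 eta s j' mu F) (a,x)"
    unfolding R2_def Ract_def using e1 e2 by (simp add: algebra_simps)
qed

lemma L4c1: assumes "\<forall>j\<in>set js. j \<noteq> s \<and> j \<noteq> j'" "s \<noteq> j'"
  shows "R2 eta s j' mu (rch eta xi lam js F) = rch eta xi lam js (R2 eta s j' mu F)"
  using assms by (induction js arbitrary: F) (auto simp: rch_def L4)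

lemma L4c: assumes "\<forall>j\<in>set js. j \<noteq> s \<and> j \<notin> set js2" "s \<notin> set js2"
  shows "p2 eta xi lam s js2 (rch eta xi lam js F) = rch eta xi lam js (p2 eta xi lam s js2 F)"
  using assms
proof (induction js2 arbitrary: F)
  case Nil then show ?case by (simp add: p2_def)
next
  case (Cons j' js2)
  have "p2 eta xi lam s (j' # js2) (rch eta xi lam js F) = p2 eta xi lam s js2 (R2 eta s j' (lam - xi j') (rch eta xi lam js F))"
    by (simp add: p2_def)
  also have "\<dots> = p2 eta xi lam s js2 (rch eta xi lam js (R2 eta s j' (lam - xi j') F))"
    using Cons.prems by (subst L4c1) auto
  also have "\<dots> = rch eta xi lam js (p2 eta xi lam s js2 (R2 eta s j' (lam - xi j') F))"
    using Cons by auto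
  finally show ?case by (simp add: p2_def)
qed

lemma L4K: assumes "j \<noteq> s" shows "K2 n K s (Ract eta j mu F) = Ract eta j mu (K2 n K s F)"
proof (rule ext, clarify)
  fix a :: nat and x :: config
  have "\<And>b. x(s := b, j := a) = x(j := a, s := b)" using assms by (auto simp: fun_eq_iff)
  then show "K2 n K s (Ract eta j mu F) (a,x) = Ract eta j mu (K2 n K s F) (a,x)"
    using assms by (simp add: K2_def Ract_def sum_distrib_left sum.distrib algebra_simps)
qed

lemma L4Kc: "\<forall>j\<in>set js. j \<noteq> s \<Longrightarrow> K2 n K s (rch eta xi lam js F) = rch eta xi lam js (K2 n K s F)"
  by (induction js arbitrary: F) (auto simp: rch_def L4K)

lemma L5: assumes "j \<noteq> s" shows "rho s c (Ract eta j mu F) = Ract eta j mu (rho s c F)"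
proof (rule ext, clarify)
  fix a :: nat and x :: config
  have "x(s := c, j := a) = x(j := a, s := c)" using assms by (auto simp: fun_eq_iff)
  then show "rho s c (Ract eta j mu F) (a,x) = Ract eta j mu (rho s c F) (a,x)"
    using assms by (simp add: rho_def Ract_def)
qed

lemma L5c: "\<forall>j\<in>set js. j \<noteq> s \<Longrightarrow> rho s c (rch eta xi lam js F) = rch eta xi lam js (rho s c F)"
  by (induction js arbitrary: F) (auto simp: rch_def L5)

lemma L8: "Ract eta j mu (\<lambda>p. \<Sum>c\<in>A. F c p) = (\<lambda>p. \<Sum>c\<in>A. Ract eta j mu (F c) p)"
  by (rule ext, clarify) (simp add: Ract_def sum_distrib_left sum.distrib)

lemma L8c: "rch eta xi lam js (\<lambda>p. \<Sum>c\<in>A. F c p) = (\<lambda>p. \<Sum>c\<in>A. rch eta xi lam js (F c) p)"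
proof (induction js arbitrary: F)
  case Nil then show ?case by (simp add: rch_def)
next
  case (Cons j js)
  have "rch eta xi lam (j # js) (\<lambda>p. \<Sum>c\<in>A. F c p) = rch eta xi lam js (Ract eta j (lam - xi j) (\<lambda>p. \<Sum>c\<in>A. F c p))"
    by (simp add: rch_def)
  also have "\<dots> = rch eta xi lam js (\<lambda>p. \<Sum>c\<in>A. Ract eta j (lam - xi j) (F c) p)" by (simp add: L8)
  also have "\<dots> = (\<lambda>p. \<Sum>c\<in>A. rch eta xi lam js (Ract eta j (lam - xi j) (F c)) p)" by (rule Cons.IH)
  finally show ?case by (simp add: rch_def)
qed

lemma Rs0: "Ract eta s 0 F = sc eta (sig s F)"
  by (rule ext, clarify) (simp add: Ract_def sc_def sig_def)

lemma eig_chain_R: assumes "\<forall>j\<in>set js. Ract eta j (lam - xi j) U = sc (f j) U"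
  shows "rch eta xi lam js U = sc (prod_list (map f js)) U"
  using assms
proof (induction js)
  case Nil then show ?case by (simp add: rch_def sc_def)
next
  case (Cons j js)
  have "rch eta xi lam (j # js) U = rch eta xi lam js (sc (f j) U)" using Cons.prems by (simp add: rch_def)
  also have "\<dots> = sc (f j) (sc (prod_list (map f js)) U)" using Cons by (simp add: L3c)
  finally show ?case by (simp add: sc_def fun_eq_iff mult.assoc)
qed

lemma eig_chain_R2: assumes "\<forall>j\<in>set js. R2 eta s j (lam - xi j) U = sc (f j) U"
  shows "p2 eta xi lam s js U = sc (prod_list (map f js)) U"
  using assms
proof (induction js arbitrary: U)
  case Nil then show ?case by (simp add: p2_def sc_def)
next
  case (Cons j js)
  have sc2: "R2 eta s j' mu (sc e G) = sc e (R2 eta s j' mu G)" for j' mu e G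
    by (rule ext, clarify) (simp add: R2_def sc_def algebra_simps)
  have p2sc: "p2 eta xi lam s js (sc e G) = sc e (p2 eta xi lam s js G)" for e G
    by (induction js arbitrary: G) (auto simp: p2_def sc2)
  have "p2 eta xi lam s (j # js) U = p2 eta xi lam s js (sc (f j) U)" using Cons.prems by (simp add: p2_def)
  also have "\<dots> = sc (f j) (sc (prod_list (map f js)) U)" using Cons by (simp add: p2sc)
  finally show ?case by (simp add: sc_def fun_eq_iff mult.assoc)
qed


lemma t0_swap: assumes "s \<in> {1..N}" "j \<in> {1..N}"
  shows "t0_vec N W (x(s := x j, j := x s)) = t0_vec N W x"
proof -
  have e: "x(s := x j, j := x s) = x \<circ> transpose s j" by (auto simp: fun_eq_iff transpose_def)
  have "(\<Prod>l\<in>{1..N}. W $$ (x l, 0)) = (\<Prod>l\<in>{1..N}. W $$ ((x \<circ> transpose s j) l, 0))"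
    using prod.permute[OF permutes_swap_id[OF assms], of "\<lambda>l. W $$ (x l, 0)"] by (simp add: comp_def)
  then show ?thesis unfolding t0_vec_def e by simp
qed

definition Uv :: "nat \<Rightarrow> nat \<Rightarrow> complex mat \<Rightarrow> (nat \<times> config \<Rightarrow> complex)" where
  "Uv N s W = (\<lambda>(b,y). t0_vec N W (y(s := b)))"

lemma L6: assumes "s \<in> {1..N}" "j \<in> {1..N}" "j \<noteq> s"
  shows "Ract eta j mu (Uv N s W) = sc (mu + eta) (Uv N s W)"
proof (rule ext, clarify)
  fix a :: nat and x :: config
  have e: "x(s := x j, j := a) = (x(s := a))(s := (x(s := a)) j, j := (x(s := a)) s)"
    using assms by (auto simp: fun_eq_iff)
  have f: "t0_vec N W (x(s := x j, j := a)) = t0_vec N W (x(s := a))"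
    by (subst e) (rule t0_swap[OF assms(1,2)])
  have f2: "t0_vec N W (x(j := a, s := x j)) = t0_vec N W (x(s := a))"
    using f fun_upd_twist[OF assms(3)] by metis
  show "Ract eta j mu (Uv N s W) (a,x) = sc (mu + eta) (Uv N s W) (a,x)"
    using assms(3) f2 by (simp add: Ract_def Uv_def sc_def algebra_simps)
qed

lemma L7a: assumes "s \<in> {1..N}" "j \<in> {1..N}"
  shows "R2 eta s j mu (dl c (t0_vec N W)) = sc (mu + eta) (dl c (t0_vec N W))"
  by (rule ext, clarify) (simp add: R2_def dl_def sc_def t0_swap[OF assms] algebra_simps)

lemma L7b: assumes "s \<in> {1..N}" and Keig: "\<forall>i<n. (\<Sum>b<n. K $$ (i,b) * W $$ (b,0)) = k1 * W $$ (i,0)"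
  shows "eqD n N (K2 n K s (dl c (t0_vec N W))) (sc k1 (dl c (t0_vec N W)))"
  unfolding eqD_def
proof (intro allI impI)
  fix a x assume a: "a < n" and x: "x \<in> configs n N"
  let ?r = "\<Prod>l\<in>{1..N}-{s}. W $$ (x l, 0)"
  have t: "t0_vec N W (x(s := b)) = W $$ (b,0) * ?r" for b
  proof -
    have "t0_vec N W (x(s := b)) = W $$ ((x(s:=b)) s, 0) * (\<Prod>l\<in>{1..N}-{s}. W $$ ((x(s:=b)) l, 0))"
      unfolding t0_vec_def using assms(1) by (subst prod.remove) auto
    also have "(\<Prod>l\<in>{1..N}-{s}. W $$ ((x(s:=b)) l, 0)) = ?r" by (rule prod.cong) auto
    finally show ?thesis by (simp only: fun_upd_same)
  qed
  have xs: "x s < n" using cfg_lt[OF x assms(1)] .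
  have "K2 n K s (dl c (t0_vec N W)) (a,x) = (if a = c then (\<Sum>b<n. K $$ (x s, b) * W $$ (b,0)) * ?r else 0)"
    by (simp add: K2_def dl_def t sum_distrib_right mult.assoc)
  also have "\<dots> = (if a = c then k1 * W $$ (x s, 0) * ?r else 0)" using Keig xs by simp
  also have "\<dots> = sc k1 (dl c (t0_vec N W)) (a,x)"
    using t[of "x s"] by (simp add: sc_def dl_def mult.assoc)
  finally show "K2 n K s (dl c (t0_vec N W)) (a,x) = sc k1 (dl c (t0_vec N W)) (a,x)" .
qed

lemma K2sc: "K2 n K s (sc e G) = sc e (K2 n K s G)"
  by (rule ext, clarify) (simp add: K2_def sc_def sum_distrib_left algebra_simps)

lemma K2_cong: "s \<in> {1..N} \<Longrightarrow> eqD n N F G \<Longrightarrow> eqD n N (K2 n K s F) (K2 n K s G)"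
  unfolding eqD_def K2_def using cfg_upd by auto

lemma js_split: assumes "s \<in> {1..N}"
  shows "[1..<Suc N] = [1..<s] @ [s] @ [Suc s..<Suc N]"
proof -
  have "[1..<s + (Suc N - s)] = [1..<s] @ [s..<s + (Suc N - s)]"
    using assms by (intro upt_add_eq_append) auto
  moreover have "s + (Suc N - s) = Suc N" using assms by auto
  moreover have "[s..<Suc N] = s # [Suc s..<Suc N]" using assms by (intro upt_conv_Cons) auto
  ultimately show ?thesis by simp
qed

lemma rch_split: assumes "s \<in> {1..N}"
  shows "rch eta xi (xi s) [1..<Suc N] F = rch eta xi (xi s) [Suc s..<Suc N] (sc eta (sig s (rch eta xi (xi s) [1..<s] F)))"
  unfolding js_split[OF assms] by (simp add: rch_def Rs0[symmetric])

lemma T_xi_zero: assumes "s \<in> {1..N}" "x \<in> configs n N" "eta = 0"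
  shows "op_app n N (transfer1 n N eta xi K (xi s)) w x = 0"
proof -
  have "sc 0 G = (\<lambda>p. 0)" for G by (simp add: sc_def)
  have "rch eta xi (xi s) [1..<Suc N] (dl c w) = (\<lambda>p. 0)" for c
  proof -
    have "rch eta xi (xi s) [1..<Suc N] (dl c w) = rch eta xi (xi s) [Suc s..<Suc N] (sc eta (sig s (rch eta xi (xi s) [1..<s] (dl c w))))"
      by (rule rch_split[OF assms(1)])
    also have "\<dots> = sc eta (rch eta xi (xi s) [Suc s..<Suc N] (sig s (rch eta xi (xi s) [1..<s] (dl c w))))"
      by (rule L3c)
    finally show ?thesis using assms(3) by (simp add: sc_def)
  qed
  then show ?thesis using assms by (simp add: transfer_act Kact_def sc_def)
qed

lemma T_xi_t0: assumes s: "s \<in> {1..N}" and x: "x \<in> configs n N"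
  and Keig: "\<forall>i<n. (\<Sum>b<n. K $$ (i,b) * W $$ (b,0)) = k1 * W $$ (i,0)"
  shows "op_app n N (transfer1 n N eta xi K (xi s)) (t0_vec N W) x
     = (eta * k1 * (\<Prod>j\<in>{1..N}-{s}. xi s - xi j + eta)) * t0_vec N W x"
proof -
  let ?t0 = "t0_vec N W"
  let ?js1 = "[1..<s]" and ?js2 = "[Suc s..<Suc N]"
  let ?Pre = "rch eta xi (xi s) ?js1"
  define P1 where "P1 = prod_list (map (\<lambda>j. xi s - xi j + eta) ?js1)"
  define P2 where "P2 = prod_list (map (\<lambda>j. xi s - xi j + eta) ?js2)"
  have xs: "x s < n" using cfg_lt[OF x s] .
  have step: "Kact n K (rch eta xi (xi s) [1..<Suc N] (dl c ?t0)) (c,x)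
      = eta * P2 * k1 * rch eta xi (xi s) ?js1 (rho s c (dl c ?t0)) (x s, x)" if c: "c < n" for c
  proof -
    have "Kact n K (rch eta xi (xi s) [1..<Suc N] (dl c ?t0))
        = Kact n K (rch eta xi (xi s) ?js2 (sc eta (sig s (?Pre (dl c ?t0)))))"
      by (subst rch_split[OF s]) (rule refl)
    also have "\<dots> = sc eta (Kact n K (rch eta xi (xi s) ?js2 (sig s (?Pre (dl c ?t0)))))"
      by (simp only: L3c L3K)
    also have "rch eta xi (xi s) ?js2 (sig s (?Pre (dl c ?t0))) = sig s (p2 eta xi (xi s) s ?js2 (?Pre (dl c ?t0)))"
      by (rule L1c) auto
    also have "Kact n K (sig s (p2 eta xi (xi s) s ?js2 (?Pre (dl c ?t0)))) = sig s (K2 n K s (p2 eta xi (xi s) s ?js2 (?Pre (dl c ?t0))))"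
      by (rule L2)
    also have "p2 eta xi (xi s) s ?js2 (?Pre (dl c ?t0)) = ?Pre (p2 eta xi (xi s) s ?js2 (dl c ?t0))"
      by (rule L4c) auto
    also have "p2 eta xi (xi s) s ?js2 (dl c ?t0) = sc P2 (dl c ?t0)"
      unfolding P2_def using s by (intro eig_chain_R2) (auto simp: L7a)
    also have "K2 n K s (?Pre (sc P2 (dl c ?t0))) = ?Pre (sc P2 (K2 n K s (dl c ?t0)))"
      by (subst L4Kc) (auto simp: K2sc)
    finally have ch: "Kact n K (rch eta xi (xi s) [1..<Suc N] (dl c ?t0)) = sc eta (sig s (?Pre (sc P2 (K2 n K s (dl c ?t0)))))" .
    have e1: "Kact n K (rch eta xi (xi s) [1..<Suc N] (dl c ?t0)) (c,x)
        = eta * P2 * ?Pre (K2 n K s (dl c ?t0)) (x s, x(s := c))"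
      unfolding ch L3c by (simp add: sc_def sig_def)
    have "eqD n N (?Pre (K2 n K s (dl c ?t0))) (?Pre (sc k1 (dl c ?t0)))"
      using s by (intro rch_cong L7b[OF s Keig]) auto
    then have "?Pre (K2 n K s (dl c ?t0)) (x s, x(s := c)) = k1 * ?Pre (dl c ?t0) (x s, x(s := c))"
      using xs c cfg_upd[OF x s c] by (simp add: eqD_def L3c, simp add: sc_def)
    also have "?Pre (dl c ?t0) (x s, x(s := c)) = rho s c (?Pre (dl c ?t0)) (x s, x)"
      by (simp add: rho_def)
    also have "\<dots> = ?Pre (rho s c (dl c ?t0)) (x s, x)" by (subst L5c) auto
    finally have "?Pre (K2 n K s (dl c ?t0)) (x s, x(s := c)) = k1 * ?Pre (rho s c (dl c ?t0)) (x s, x)" .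
    then show ?thesis using e1 by (metis mult.assoc)
  qed
  have "op_app n N (transfer1 n N eta xi K (xi s)) ?t0 x
     = eta * P2 * k1 * (\<Sum>c<n. ?Pre (rho s c (dl c ?t0)) (x s, x))"
    using x step by (simp add: transfer_act sum_distrib_left)
  also have "(\<Sum>c<n. ?Pre (rho s c (dl c ?t0)) (x s, x)) = ?Pre (\<lambda>p. \<Sum>c<n. rho s c (dl c ?t0) p) (x s, x)"
    by (simp add: L8c)
  also have "\<dots> = ?Pre (Uv N s W) (x s, x)"
  proof -
    have "eqD n N (\<lambda>p. \<Sum>c<n. rho s c (dl c ?t0) p) (Uv N s W)"
      unfolding eqD_def by (auto simp: rho_def dl_def Uv_def if_distrib cong: if_cong)
    then have "eqD n N (?Pre (\<lambda>p. \<Sum>c<n. rho s c (dl c ?t0) p)) (?Pre (Uv N s W))"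
      using s by (intro rch_cong) auto
    then show ?thesis using xs x by (simp add: eqD_def)
  qed
  also have "?Pre (Uv N s W) = sc P1 (Uv N s W)"
    unfolding P1_def using s by (intro eig_chain_R) (auto simp: L6)
  finally have "op_app n N (transfer1 n N eta xi K (xi s)) ?t0 x = eta * P2 * k1 * (P1 * ?t0 x)"
    by (simp add: sc_def Uv_def)
  moreover have "P1 * P2 = (\<Prod>j\<in>{1..N}-{s}. xi s - xi j + eta)"
  proof -
    have "P1 = (\<Prod>j\<in>set ?js1. xi s - xi j + eta)" unfolding P1_def
      by (rule prod.distinct_set_conv_list[symmetric]) simp
    moreover have "P2 = (\<Prod>j\<in>set ?js2. xi s - xi j + eta)" unfolding P2_def
      by (rule prod.distinct_set_conv_list[symmetric]) simp
    moreover have "{1..N}-{s} = set ?js1 \<union> set ?js2" using s by auto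
    moreover have "set ?js1 \<inter> set ?js2 = {}" by auto
    ultimately show ?thesis by (simp only: prod.union_disjoint finite_set)
  qed
  ultimately show ?thesis by (simp add: algebra_simps)
qed


definition pr :: "nat \<Rightarrow> nat \<Rightarrow> hvec \<Rightarrow> hvec \<Rightarrow> complex" where
  "pr n N phi u = (\<Sum>x\<in>configs n N. phi x * u x)"

lemma pr_covec: "pr n N (covec_app n N phi A) u = pr n N phi (op_app n N A u)"
proof -
  have "pr n N (covec_app n N phi A) u = (\<Sum>y\<in>configs n N. \<Sum>x\<in>configs n N. phi x * A x y * u y)"
    by (simp add: pr_def covec_app_def sum_distrib_right)
  also have "\<dots> = (\<Sum>x\<in>configs n N. \<Sum>y\<in>configs n N. phi x * A x y * u y)" by (rule sum.swap)
  also have "\<dots> = pr n N phi (op_app n N A u)"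
    by (simp add: pr_def op_app_def sum_distrib_left mult.assoc)
  finally show ?thesis .
qed

lemma pr_eig: assumes "\<forall>x\<in>configs n N. op_app n N A u x = mu * u x"
  shows "pr n N (covec_app n N phi A) u = mu * pr n N phi u"
proof -
  have "pr n N (covec_app n N phi A) u = pr n N phi (op_app n N A u)" by (rule pr_covec)
  also have "\<dots> = (\<Sum>x\<in>configs n N. mu * (phi x * u x))"
    unfolding pr_def using assms by (intro sum.cong) auto
  finally show ?thesis by (simp add: pr_def sum_distrib_left)
qed

lemma pr_funpow: assumes "\<forall>x\<in>configs n N. op_app n N A u x = mu * u x"
  shows "pr n N (((\<lambda>phi. covec_app n N phi A) ^^ k) phi) u = mu ^ k * pr n N phi u"
  by (induction k) (simp_all add: pr_eig[OF assms])

lemma pr_hcov_aux: assumes "\<forall>l\<in>{1..N}. \<forall>x\<in>configs n N. op_app n N (transfer1 n N eta xi K (xi l)) u x = mu l * u x"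
  shows "l \<le> N \<Longrightarrow> pr n N (hcov_aux n N eta xi K S h l) u = (\<Prod>j\<in>{1..l}. mu j ^ h j) * pr n N S u"
proof (induction l)
  case 0 then show ?case by simp
next
  case (Suc l)
  have "pr n N (hcov_aux n N eta xi K S h (Suc l)) u = mu (Suc l) ^ h (Suc l) * pr n N (hcov_aux n N eta xi K S h l) u"
    using assms Suc.prems by (simp add: pr_funpow)
  then show ?case using Suc by (simp add: prod.cl_ivl_Suc ac_simps)
qed

lemma pr_hcov: assumes "\<forall>l\<in>{1..N}. \<forall>x\<in>configs n N. op_app n N (transfer1 n N eta xi K (xi l)) u x = mu l * u x"
  shows "pr n N (hcov n N eta xi K S h) u = (\<Prod>j\<in>{1..N}. mu j ^ h j) * pr n N S u"
  unfolding hcov_def using pr_hcov_aux[OF assms] by simp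

lemma pr_B: assumes Bdef: "\<forall>lam. \<forall>y\<in>configs n N.
                 covec_app n N phi (B lam) y = b lam * phi y"
  shows "pr n N phi (B_prod n N B lams M u) = (\<Prod>j\<in>{1..M}. b (lams j)) * pr n N phi u"
proof (induction M arbitrary: u)
  case 0 then show ?case by simp
next
  case (Suc M)
  have "pr n N phi (op_app n N (B (lams (Suc M))) u) = b (lams (Suc M)) * pr n N phi u"
    unfolding pr_covec[symmetric] using Bdef by (simp add: pr_def sum_distrib_left mult.assoc)
  then show ?case using Suc by (simp add: prod.cl_ivl_Suc ac_simps)
qed

lemma separation: assumes basis: "is_dual_basis n N cv"
  and z: "\<forall>h\<in>configs n N. pr n N (cv h) u = 0"
  shows "\<forall>x\<in>configs n N. u x = 0"
proof
  fix x0 assume x0: "x0 \<in> configs n N"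
  define phi where "phi = (\<lambda>y::config. if y = x0 then (1::complex) else 0)"
  obtain c where c: "\<forall>y\<in>configs n N. phi y = (\<Sum>h\<in>configs n N. c h * cv h y)"
    using basis unfolding is_dual_basis_def by blast
  have "(\<Sum>y\<in>configs n N. phi y * u y) = (\<Sum>y\<in>configs n N. if y = x0 then u y else 0)"
    by (rule sum.cong) (auto simp: phi_def)
  then have "u x0 = (\<Sum>y\<in>configs n N. phi y * u y)" using x0 by (simp add: cfg_fin)
  also have "\<dots> = (\<Sum>y\<in>configs n N. \<Sum>h\<in>configs n N. c h * cv h y * u y)"
    using c by (simp add: sum_distrib_right)
  also have "\<dots> = (\<Sum>h\<in>configs n N. \<Sum>y\<in>configs n N. c h * cv h y * u y)" by (rule sum.swap)
  also have "\<dots> = (\<Sum>h\<in>configs n N. c h * pr n N (cv h) u)"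
    by (simp add: pr_def sum_distrib_left mult.assoc)
  also have "\<dots> = 0" using z by simp
  finally show "u x0 = 0" .
qed

lemma separation2: assumes basis: "is_dual_basis n N cv"
  and z: "\<forall>h\<in>configs n N. pr n N (cv h) u = k * pr n N (cv h) u'"
  shows "\<forall>x\<in>configs n N. u x = k * u' x"
proof -
  have "\<forall>h\<in>configs n N. pr n N (cv h) (\<lambda>x. u x - k * u' x) = 0"
    using z by (simp add: pr_def sum_subtractf sum_distrib_left algebra_simps)
  from separation[OF basis this] show ?thesis by simp
qed

lemma tseq_zero: assumes "2 \<le> j" "j \<le> n" "s \<in> {1..N}"
  shows "tseq n N eta xi K t1 j (xi s + of_nat (j - 1) * eta) = 0"
proof -
  obtain m where j: "j = Suc (Suc m)" using assms(1) by (metis add_2_eq_Suc le_Suc_ex)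
  let ?l = "xi s + of_nat (j - 1) * eta"
  show ?thesis
  proof (cases "j = n")
    case True
    have z: "?l - xi s - of_nat (j - 1) * eta = 0" by simp
    have "j - 1 \<in> {1..n-1}" using True j by auto
    have "(\<Prod>m\<in>{1..n-1}. ?l - xi s - of_nat m * eta) = 0"
      by (rule prod_zero) (use z \<open>j - 1 \<in> {1..n-1}\<close> in blast)+
    then have zz: "(?l - xi s + eta) * (\<Prod>m\<in>{1..n-1}. ?l - xi s - of_nat m * eta) = 0" by simp
    have "(\<Prod>b\<in>{1..N}. (?l - xi b + eta) * (\<Prod>m\<in>{1..n-1}. ?l - xi b - of_nat m * eta)) = 0"
      by (rule prod_zero) (use zz assms(3) in blast)+
    then have "qdet n N eta xi K ?l = 0" by (simp add: qdet_def)
    moreover have "tseq n N eta xi K t1 (Suc (Suc m)) ?l = qdet n N eta xi K ?l"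
      by (simp only: tseq.simps) (use True j in simp)
    ultimately show ?thesis using j by simp
  next
    case False
    have z: "?l - xi s - of_nat (Suc m) * eta = 0" using j by simp
    have zz: "(\<Prod>r\<in>{1..Suc m}. ?l - xi s - of_nat r * eta) = 0"
      by (rule prod_zero) (use z in \<open>auto intro!: bexI[of _ "Suc m"] simp del: of_nat_Suc\<close>)
    have "(\<Prod>b\<in>{1..N}. \<Prod>r\<in>{1..Suc m}. ?l - xi b - of_nat r * eta) = 0"
      by (rule prod_zero) (use zz assms(3) in blast)+
    moreover have "tseq n N eta xi K t1 (Suc (Suc m)) ?l = (\<Prod>b\<in>{1..N}. \<Prod>r\<in>{1..Suc m}. ?l - xi b - of_nat r * eta) *
        (Tinf n K (Suc (Suc m)) * (\<Prod>b\<in>{1..N}. ?l - xi b)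
         + (\<Sum>a\<in>{1..N}. g_coef N eta xi (Suc (Suc m)) a ?l * t1 (xi a)
              * tseq n N eta xi K t1 (Suc m) (xi a - eta)))"
      by (simp only: tseq.simps) (use False j in simp)
    ultimately show ?thesis using j by simp
  qed
qed


lemma qsc_at:
  fixes lams :: "nat \<Rightarrow> complex"
  assumes n2: "n \<ge> 2"
    and generic: "\<forall>a\<in>{1..N}. \<forall>b\<in>{1..N}. a \<noteq> b \<longrightarrow>
                    (\<forall>r::int. \<bar>r\<bar> \<le> int n \<longrightarrow> xi a - xi b \<noteq> of_int r * eta)"
    and s: "s \<in> {1..N}" and eta: "eta \<noteq> 0" and k1: "k1 \<noteq> 0"
    and qsc: "\<forall>lam. (\<Sum>b\<in>{0..n}. alpha N eta xi k1 b lam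
                 * (\<Prod>a\<in>{1..M}. (lam - of_nat b * eta) - lams a)
                 * tseq n N eta xi K t1 (n - b) (lam - of_nat b * eta)) = 0"
  shows "t1 (xi s) * (\<Prod>a\<in>{1..M}. xi s - lams a) = alpha1 N eta xi k1 (xi s) * (\<Prod>a\<in>{1..M}. (xi s - eta) - lams a)"
proof -
  obtain m where n: "n = Suc (Suc m)" using n2 by (metis add_2_eq_Suc le_Suc_ex)
  define l0 where "l0 = xi s + of_nat (Suc m) * eta"
  define F where "F b = alpha N eta xi k1 b l0
                 * (\<Prod>a\<in>{1..M}. (l0 - of_nat b * eta) - lams a)
                 * tseq n N eta xi K t1 (n - b) (l0 - of_nat b * eta)" for b
  have sum0: "(\<Sum>b\<in>{0..n}. F b) = 0" using qsc unfolding F_def by blast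
  have Fz: "F b = 0" if b: "b \<le> m" for b
  proof -
    have "l0 - of_nat b * eta = xi s + of_nat ((n - b) - 1) * eta"
      using b n by (simp add: l0_def of_nat_diff algebra_simps)
    then have "tseq n N eta xi K t1 (n - b) (l0 - of_nat b * eta) = 0"
      using tseq_zero[of "n - b" n s N eta xi K t1] b n s by simp
    then show ?thesis by (simp add: F_def)
  qed
  define A where "A = alpha N eta xi k1 (Suc m) l0"
  have A: "A = (-1) ^ m * (\<Prod>h\<in>{0..m}. alpha1 N eta xi k1 (l0 - of_nat h * eta))"
    by (simp add: A_def alpha_def)
  have l0m: "l0 - of_nat (Suc m) * eta = xi s" by (simp add: l0_def)
  have l0mm: "l0 - of_nat (Suc (Suc m)) * eta = xi s - eta" by (simp add: l0_def algebra_simps)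
  have F1: "F (Suc m) = A * (\<Prod>a\<in>{1..M}. xi s - lams a) * t1 (xi s)"
    unfolding F_def A_def l0m using n by simp
  have F2: "F (Suc (Suc m)) = - A * alpha1 N eta xi k1 (xi s) * (\<Prod>a\<in>{1..M}. (xi s - eta) - lams a)"
  proof -
    have "alpha N eta xi k1 (Suc (Suc m)) l0 = (-1) ^ Suc m * (\<Prod>h\<in>{0..Suc m}. alpha1 N eta xi k1 (l0 - of_nat h * eta))"
      by (simp add: alpha_def)
    also have "\<dots> = - A * alpha1 N eta xi k1 (xi s)"
      unfolding A using l0m by (simp add: prod.atLeast0_atMost_Suc)
    finally show ?thesis unfolding F_def l0mm using n by simp
  qed
  have spl: "(\<Sum>b\<in>{0..n}. F b) = (\<Sum>b\<in>{0..m}. F b) + F (Suc m) + F (Suc (Suc m))"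
    using n by (simp add: sum.atLeast0_atMost_Suc)
  then have "A * ((\<Prod>a\<in>{1..M}. xi s - lams a) * t1 (xi s) - alpha1 N eta xi k1 (xi s) * (\<Prod>a\<in>{1..M}. (xi s - eta) - lams a)) = 0"
  proof -
    have S0: "(\<Sum>b\<in>{0..m}. F b) = 0" using Fz by simp
    have "F (Suc m) + F (Suc (Suc m)) = 0" using sum0 S0 spl by simp
    then show ?thesis unfolding F1 F2 by (simp add: algebra_simps)
  qed
  moreover have "A \<noteq> 0"
  proof -
    have "alpha1 N eta xi k1 (l0 - of_nat h * eta) \<noteq> 0" if h: "h \<le> m" for h
    proof -
      have fac: "l0 - of_nat h * eta + eta - xi a = xi s - xi a + of_nat (n - h) * eta" for a
        using h n by (simp add: l0_def of_nat_diff algebra_simps)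
      have "l0 - of_nat h * eta + eta - xi a \<noteq> 0" if a: "a \<in> {1..N}" for a
      proof (cases "a = s")
        case True
        have nz: "(of_nat (n - h) :: complex) \<noteq> 0" using h n by (simp only: of_nat_eq_0_iff)
        show ?thesis unfolding fac True using eta nz by simp
      next
        case False
        have "\<forall>r::int. \<bar>r\<bar> \<le> int n \<longrightarrow> xi s - xi a \<noteq> of_int r * eta"
          using generic s a False by auto
        moreover have "\<bar>- int (n - h)\<bar> \<le> int n" by simp
        ultimately have "xi s - xi a \<noteq> of_int (- int (n - h)) * eta" by blast
        then have g2: "xi s - xi a \<noteq> - (of_nat (n - h) * eta)" by simp
        show ?thesis unfolding fac using g2 by (simp add: eq_neg_iff_add_eq_0)
      qed
      then show ?thesis using k1 by (simp add: alpha1_def)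
    qed
    then show ?thesis unfolding A by simp
  qed
  ultimately show ?thesis by (simp add: algebra_simps)
qed

lemma Keig_lem:
  fixes K W Winv KJ :: "complex mat"
  assumes K: "K \<in> carrier_mat n n" and W: "W \<in> carrier_mat n n" "Winv \<in> carrier_mat n n" "Winv * W = 1\<^sub>m n"
    and KJ: "KJ \<in> carrier_mat n n" "K = W * KJ * Winv"
    and k: "KJ *\<^sub>v unit_vec n 0 = k1 \<cdot>\<^sub>v unit_vec n 0" and n0: "0 < n"
  shows "\<forall>i<n. (\<Sum>b<n. K $$ (i,b) * W $$ (b,0)) = k1 * W $$ (i,0)"
proof (intro allI impI)
  fix i assume i: "i < n"
  let ?e = "unit_vec n 0 :: complex vec"
  let ?w = "W *\<^sub>v ?e"
  have e: "?e \<in> carrier_vec n" by simp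
  have w: "?w \<in> carrier_vec n" using W by simp
  have "Winv *\<^sub>v ?w = ?e" using W e by (simp add: assoc_mult_mat_vec[symmetric])
  then have "K *\<^sub>v ?w = W *\<^sub>v (KJ *\<^sub>v ?e)"
  proof -
    assume h: "Winv *\<^sub>v ?w = ?e"
    have "K *\<^sub>v ?w = (W * KJ) *\<^sub>v (Winv *\<^sub>v ?w)"
      unfolding KJ(2) using W KJ w by (intro assoc_mult_mat_vec) auto
    also have "\<dots> = W *\<^sub>v (KJ *\<^sub>v ?e)" unfolding h using W KJ e by (intro assoc_mult_mat_vec) auto
    finally show ?thesis .
  qed
  also have "\<dots> = k1 \<cdot>\<^sub>v ?w" using k W e by (simp add: mult_mat_vec)
  finally have kw: "K *\<^sub>v ?w = k1 \<cdot>\<^sub>v ?w" .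
  have wb: "?w $ b = W $$ (b,0)" if "b < n" for b
  proof -
    have "(\<Sum>i = 0..<n. W $$ (b, i) * (if i = 0 then 1 else 0)) = (\<Sum>i = 0..<n. if i = 0 then W $$ (b, i) else 0)"
      by (rule sum.cong) auto
    then show ?thesis using that W n0 by (simp add: scalar_prod_def unit_vec_def)
  qed
  have "(K *\<^sub>v ?w) $ i = (\<Sum>b<n. K $$ (i,b) * W $$ (b,0))"
    using K i wb W by (simp add: scalar_prod_def lessThan_atLeast0)
  moreover have "(k1 \<cdot>\<^sub>v ?w) $ i = k1 * W $$ (i,0)" using i W wb by simp
  ultimately show "(\<Sum>b<n. K $$ (i,b) * W $$ (b,0)) = k1 * W $$ (i,0)" using kw by simp
qed

lemma prod_neg: "(\<Prod>j\<in>{1..M}. z - (l j::complex)) = (-1)^M * (\<Prod>j\<in>{1..M}. l j - z)"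
proof -
  have "(\<Prod>j\<in>{1..M}. z - l j) = (\<Prod>j\<in>{1..M}. (-1) * (l j - z))" by (rule prod.cong) auto
  also have "\<dots> = (-1)^M * (\<Prod>j\<in>{1..M}. l j - z)"
    by (simp only: prod.distrib prod_constant card_atLeastAtMost) simp
  finally show ?thesis .
qed

lemma t0_nonzero:
  fixes W Winv :: "complex mat"
  assumes W: "W \<in> carrier_mat n n" "Winv \<in> carrier_mat n n" "Winv * W = 1\<^sub>m n" and n0: "0 < n"
  shows "\<exists>x\<in>configs n N. t0_vec N W x \<noteq> 0"
proof -
  have "\<exists>i<n. W $$ (i,0) \<noteq> 0"
  proof (rule ccontr)
    assume "\<not> ?thesis"
    then have z: "\<forall>i<n. W $$ (i,0) = 0" by auto
    have "(Winv * W) $$ (0,0) = (\<Sum>i<n. Winv $$ (0,i) * W $$ (i,0))"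
      using W(1,2) n0 by (simp add: scalar_prod_def lessThan_atLeast0)
    also have "\<dots> = 0" using z by simp
    finally show False using W n0 by simp
  qed
  then obtain i where i: "i < n" "W $$ (i,0) \<noteq> 0" by blast
  let ?x = "restrict (\<lambda>_. i) {1..N}"
  have "?x \<in> configs n N" using i by (simp add: configs_def)
  moreover have "t0_vec N W ?x = W $$ (i,0) ^ N" by (simp add: t0_vec_def)
  moreover have "W $$ (i,0) ^ N \<noteq> 0" using i by simp
  ultimately show ?thesis by metis
qed

theorem mainTheorem6:
  fixes n N M :: nat and eta k1 :: complex and xi lams :: "nat \<Rightarrow> complex"
    and K W Winv KJ :: "complex mat" and n_as :: "(nat \<times> complex) list"
    and S :: hvec and t1 :: "complex \<Rightarrow> complex" and B :: "complex \<Rightarrow> hop"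
  assumes n2: "n \<ge> 2" and N1: "N \<ge> 1"
    and generic: "\<forall>a\<in>{1..N}. \<forall>b\<in>{1..N}. a \<noteq> b \<longrightarrow>
                    (\<forall>r::int. \<bar>r\<bar> \<le> int n \<longrightarrow> xi a - xi b \<noteq> of_int r * eta)"
    and K: "K \<in> carrier_mat n n" and wsimple: "w_simple K"
    and W: "W \<in> carrier_mat n n" "Winv \<in> carrier_mat n n"
           "W * Winv = 1\<^sub>m n" "Winv * W = 1\<^sub>m n"
    and KJ: "KJ = jordan_matrix n_as" "KJ \<in> carrier_mat n n" "K = W * KJ * Winv"
    and k1: "KJ *\<^sub>v unit_vec n 0 = k1 \<cdot>\<^sub>v unit_vec n 0" "k1 \<noteq> 0"
    and basis: "is_dual_basis n N (hcov n N eta xi K S)"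
    and Bdef: "\<forall>lam. \<forall>h\<in>configs n N. \<forall>y\<in>configs n N.
                 covec_app n N (hcov n N eta xi K S h) (B lam) y
                   = b_eig n N eta xi h lam * hcov n N eta xi K S h y"
    and eigval: "\<exists>v. (\<exists>x\<in>configs n N. v x \<noteq> 0) \<and>
                 (\<forall>lam. \<forall>x\<in>configs n N.
                    op_app n N (transfer1 n N eta xi K lam) v x = t1 lam * v x)"
    and M: "M \<le> N" and roots: "\<forall>a\<in>{1..M}. \<forall>b\<in>{1..N}. lams a \<noteq> xi b"
    and qsc: "\<forall>lam. (\<Sum>b\<in>{0..n}. alpha N eta xi k1 b lam
                 * (\<Prod>a\<in>{1..M}. (lam - of_nat b * eta) - lams a)
                 * tseq n N eta xi K t1 (n - b) (lam - of_nat b * eta)) = 0"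
  shows "(\<exists>x\<in>configs n N. B_prod n N B lams M (t0_vec N W) x \<noteq> 0)
       \<and> (\<forall>lam. \<forall>x\<in>configs n N.
            op_app n N (transfer1 n N eta xi K lam) (B_prod n N B lams M (t0_vec N W)) x
              = t1 lam * B_prod n N B lams M (t0_vec N W) x)
       \<and> (\<forall>w. (\<forall>lam. \<forall>x\<in>configs n N.
                  op_app n N (transfer1 n N eta xi K lam) w x = t1 lam * w x)
              \<longrightarrow> (\<exists>c. \<forall>x\<in>configs n N. w x = c * B_prod n N B lams M (t0_vec N W) x))"

proof -
  let ?C = "configs n N"
  let ?T = "transfer1 n N eta xi K"
  let ?t0 = "t0_vec N W"
  let ?Bt = "B_prod n N B lams M ?t0"
  let ?hc = "hcov n N eta xi K S"
  define c where "c l = eta * k1 * (\<Prod>j\<in>{1..N}-{l}. xi l - xi j + eta)" for l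
  have n0: "0 < n" using n2 by simp
  have Keig: "\<forall>i<n. (\<Sum>b<n. K $$ (i,b) * W $$ (b,0)) = k1 * W $$ (i,0)"
    by (rule Keig_lem[OF K W(1,2,4) KJ(2,3) k1(1) n0])
  have t0eig: "\<forall>l\<in>{1..N}. \<forall>x\<in>?C. op_app n N (?T (xi l)) ?t0 x = c l * ?t0 x"
    using T_xi_t0[OF _ _ Keig] by (simp add: c_def)
  have c_alpha: "c l = alpha1 N eta xi k1 (xi l)" if l: "l \<in> {1..N}" for l
  proof -
    have "alpha1 N eta xi k1 (xi l) = k1 * ((xi l + eta - xi l) * (\<Prod>a\<in>{1..N}-{l}. xi l + eta - xi a))"
      unfolding alpha1_def using l by (subst prod.remove) auto
    then show ?thesis by (simp add: c_def algebra_simps)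
  qed
  obtain v where v1: "\<exists>x\<in>?C. v x \<noteq> 0"
    and v2: "\<forall>lam. \<forall>x\<in>?C. op_app n N (?T lam) v x = t1 lam * v x"
    using eigval by blast
  define P where "P l = (\<Prod>j\<in>{1..M}. lams j - xi l)" for l
  define Q where "Q l = (\<Prod>j\<in>{1..M}. lams j - xi l + eta)" for l
  have key: "Q l * c l = P l * t1 (xi l)" if l: "l \<in> {1..N}" for l
  proof (cases "eta = 0")
    case True
    obtain x0 where x0: "x0 \<in> ?C" "v x0 \<noteq> 0" using v1 by blast
    have "t1 (xi l) * v x0 = 0" using v2 x0 T_xi_zero[OF l x0(1) True] by metis
    then have "t1 (xi l) = 0" using x0 by simp
    then show ?thesis using True by (simp add: c_def)
  next
    case False
    have q: "t1 (xi l) * (\<Prod>a\<in>{1..M}. xi l - lams a) = alpha1 N eta xi k1 (xi l) * (\<Prod>a\<in>{1..M}. (xi l - eta) - lams a)"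
      by (rule qsc_at[OF n2 generic l False k1(2) qsc])
    have p1: "(\<Prod>a\<in>{1..M}. xi l - lams a) = (-1)^M * P l" unfolding P_def by (rule prod_neg)
    have p2: "(\<Prod>a\<in>{1..M}. (xi l - eta) - lams a) = (-1)^M * Q l"
    proof -
      have "(\<Prod>a\<in>{1..M}. (xi l - eta) - lams a) = (-1)^M * (\<Prod>a\<in>{1..M}. lams a - (xi l - eta))" by (rule prod_neg)
      then show ?thesis by (simp add: Q_def algebra_simps)
    qed
    have "(-1)^M * (t1 (xi l) * P l) = (-1)^M * (c l * Q l)"
      using q unfolding p1 p2 c_alpha[OF l] by (simp add: algebra_simps)
    then show ?thesis by (simp add: algebra_simps)
  qed
  define D where "D = (\<Prod>l\<in>{1..N}. P l ^ (n - 1))"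
  have bprod: "(\<Prod>j\<in>{1..M}. b_eig n N eta xi h (lams j)) * (\<Prod>l\<in>{1..N}. c l ^ h l)
      = D * (\<Prod>l\<in>{1..N}. t1 (xi l) ^ h l)" if h: "h \<in> ?C" for h
  proof -
    have "(\<Prod>j\<in>{1..M}. b_eig n N eta xi h (lams j))
        = (\<Prod>a\<in>{1..N}. \<Prod>j\<in>{1..M}. (lams j - xi a) ^ (n - 1 - h a) * (lams j - xi a + eta) ^ h a)"
      unfolding b_eig_def by (rule prod.swap)
    also have "\<dots> = (\<Prod>a\<in>{1..N}. P a ^ (n - 1 - h a) * Q a ^ h a)"
      by (simp add: P_def Q_def prod.distrib prod_power_distrib)
    finally have e1: "(\<Prod>j\<in>{1..M}. b_eig n N eta xi h (lams j)) = (\<Prod>a\<in>{1..N}. P a ^ (n - 1 - h a) * Q a ^ h a)" .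
    have e2: "P a ^ (n - 1 - h a) * Q a ^ h a * c a ^ h a = P a ^ (n - 1) * t1 (xi a) ^ h a" if a: "a \<in> {1..N}" for a
    proof -
      have ha: "h a \<le> n - 1" using cfg_lt[OF h a] by simp
      have "P a ^ (n - 1 - h a) * Q a ^ h a * c a ^ h a = P a ^ (n - 1 - h a) * (Q a * c a) ^ h a"
        by (simp add: power_mult_distrib)
      also have "\<dots> = P a ^ (n - 1 - h a) * P a ^ h a * t1 (xi a) ^ h a"
        unfolding key[OF a] by (simp add: power_mult_distrib)
      also have "\<dots> = P a ^ (n - 1) * t1 (xi a) ^ h a"
      proof -
        have "n - 1 - h a + h a = n - 1" using ha by simp
        then show ?thesis by (metis power_add)
      qed
      finally show ?thesis .
    qed
    show ?thesis unfolding e1 D_def prod.distrib[symmetric] using e2 by (intro prod.cong) auto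
  qed
  have Dnz: "D \<noteq> 0"
    unfolding D_def P_def using roots by (auto simp: prod_zero_iff)
  have pr_w: "pr n N (?hc h) w = (\<Prod>l\<in>{1..N}. t1 (xi l) ^ h l) * pr n N S w"
    if w: "\<forall>lam. \<forall>x\<in>?C. op_app n N (?T lam) w x = t1 lam * w x" for w h
    by (rule pr_hcov) (use w in auto)
  have pr_t0: "pr n N (?hc h) ?t0 = (\<Prod>l\<in>{1..N}. c l ^ h l) * pr n N S ?t0" for h
    by (rule pr_hcov) (use t0eig in auto)
  have pr_Bt: "pr n N (?hc h) ?Bt = D * pr n N S ?t0 * (\<Prod>l\<in>{1..N}. t1 (xi l) ^ h l)" if h: "h \<in> ?C" for h
  proof -
    have "pr n N (?hc h) ?Bt = (\<Prod>j\<in>{1..M}. b_eig n N eta xi h (lams j)) * pr n N (?hc h) ?t0"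
      by (rule pr_B) (use Bdef h in auto)
    then show ?thesis unfolding pr_t0 using bprod[OF h] by (simp add: algebra_simps)
  qed
  have zero_pr: "pr n N phi u = 0" if "\<forall>x\<in>?C. u x = 0" for phi u
    using that by (simp add: pr_def)
  have nz_pr: "pr n N S u \<noteq> 0" if u1: "\<exists>x\<in>?C. u x \<noteq> 0"
      and u2: "\<forall>h\<in>?C. pr n N (?hc h) u = (\<Prod>l\<in>{1..N}. t1 (xi l) ^ h l) * pr n N S u \<or>
                      pr n N (?hc h) u = (\<Prod>l\<in>{1..N}. c l ^ h l) * pr n N S u" for u
  proof
    assume "pr n N S u = 0"
    then have "\<forall>h\<in>?C. pr n N (?hc h) u = 0" using u2 by auto
    from separation[OF basis this] u1 show False by auto
  qed
  have s0: "pr n N S ?t0 \<noteq> 0"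
    using nz_pr[OF t0_nonzero[OF W(1,2,4) n0]] pr_t0 by blast
  have sv: "pr n N S v \<noteq> 0"
    using nz_pr[OF v1] pr_w[OF v2] by blast
  define h0 where "h0 = restrict (\<lambda>_. 0::nat) {1..N}"
  have h0: "h0 \<in> ?C" using n0 by (simp add: h0_def configs_def)
  have conj1: "\<exists>x\<in>?C. ?Bt x \<noteq> 0"
  proof (rule ccontr)
    assume "\<not> ?thesis"
    then have "pr n N (?hc h0) ?Bt = 0" using zero_pr by auto
    moreover have "pr n N (?hc h0) ?Bt = D * pr n N S ?t0" using pr_Bt[OF h0] by (simp add: h0_def)
    ultimately show False using Dnz s0 by simp
  qed
  define kap where "kap = D * pr n N S ?t0 / pr n N S v"
  have Bv: "\<forall>x\<in>?C. ?Bt x = kap * v x"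
  proof (rule separation2[OF basis])
    show "\<forall>h\<in>?C. pr n N (?hc h) ?Bt = kap * pr n N (?hc h) v"
      using pr_Bt pr_w[OF v2] sv by (simp add: kap_def)
  qed
  have conj2: "\<forall>lam. \<forall>x\<in>?C. op_app n N (?T lam) ?Bt x = t1 lam * ?Bt x"
  proof (intro allI ballI)
    fix lam x assume x: "x \<in> ?C"
    have "op_app n N (?T lam) ?Bt x = kap * op_app n N (?T lam) v x"
      unfolding op_app_def using Bv by (simp add: sum_distrib_left algebra_simps)
    then show "op_app n N (?T lam) ?Bt x = t1 lam * ?Bt x" using v2 x Bv by simp
  qed
  have conj3: "\<exists>cc. \<forall>x\<in>?C. w x = cc * ?Bt x"
    if w: "\<forall>lam. \<forall>x\<in>?C. op_app n N (?T lam) w x = t1 lam * w x" for w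
  proof -
    have "\<forall>x\<in>?C. w x = (pr n N S w / (D * pr n N S ?t0)) * ?Bt x"
    proof (rule separation2[OF basis])
      show "\<forall>h\<in>?C. pr n N (?hc h) w = (pr n N S w / (D * pr n N S ?t0)) * pr n N (?hc h) ?Bt"
        using pr_Bt pr_w[OF w] Dnz s0 by simp
    qed
    then show ?thesis by blast
  qed
  show ?thesis using conj1 conj2 conj3 by blast
qed

end
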